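(* Assume $\delta=d$ and $\gamma\ge1$. Then on $A_p\times\mathbb{C}$ the limit $$G_f^\alpha(z,w)=\lim_{n\to\infty}\frac{1}{d^n}\log^+\max\{|p^n(z)|^{\max\{\alpha,0\}},|Q_z^n(w)|\}$$ exists in $[0,+\infty]$ and $$G_f^\alpha(z,w)=\begin{cases}+\infty & (z,w)\in A_f,\\ \max\{\alpha,0\}\,G_p(z) & (z,w)\in B_f.\end{cases}$$
   Context: Let $p(z)=z^d+O(z^{d-1})$ be a monic polynomial of degree $\delta=d\ge 2$, and let $q(z,w)=b(z)w^d+(\text{terms of lower degree in } w)$ be a polynomial with $\deg_w q=d$, where $b$ is a monic polynomial of degree $\gamma$. Let $f(z,w)=(p(z),q(z,w))$. Write $Q_z^n=q_{p^{n-1}(z)}\circ\cdots\circ q_{p(z)}\circ q_z$ with $q_z=q(z,\cdot)$, so $f^n(z,w)=(p^n(z),Q_z^n(w))$. Let $A_p=\{z: p^n(z)\to\infty\}$ and $G_p(z)=\lim_n d^{-n}\log^+|p^n(z)|$. Define $\alpha=\max\{(n_j-\gamma)/(d-m_j)\}$ over monomials $z^{n_j}w^{m_j}$ appearing in $q$ with nonzero coefficient and $m_j<d$, and $\alpha=-\infty$ if $q=b(z)w^d$ (then $\max\{\alpha,0\}=0$). Let $W_R=\{(z,w):|z|>R,\ |w|>R|z|^\alpha\}$ (if $\alpha=-\infty$: $\{|z|>R,\ w\ne0\}$), fix $R>1$ large enough that $f(W_R)\subset W_R$ and $W_R\subset A_p\times\mathbb{C}$, and set $A_f=\bigcup_{n\ge0}f^{-n}(W_R)$,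 $B_f=(A_p\times\mathbb{C})\setminus A_f$. *)

theory Defs
  imports "HOL-Analysis.Analysis" "HOL-Computational_Algebra.Polynomial"
begin

text \<open>The polynomial q(z,w) is represented by its coefficients as polynomials in z:
  q(z,w) = sum_{j<=d} B_j(z) w^j, with B_d = b.\<close>

definition qfun :: "(nat \<Rightarrow> complex poly) \<Rightarrow> nat \<Rightarrow> complex \<Rightarrow> complex \<Rightarrow> complex" where
  "qfun B d z w = (\<Sum>j\<le>d. poly (B j) z * w ^ j)"

definition skew :: "complex poly \<Rightarrow> (nat \<Rightarrow> complex poly) \<Rightarrow> nat \<Rightarrow> complex \<times> complex \<Rightarrow> complex \<times> complex" where
  "skew p B d = (\<lambda>(z, w). (poly p z, qfun B d z w))"

definition logplus :: "real \<Rightarrow> real" where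
  "logplus x = max 0 (ln x)"

definition escape_set :: "complex poly \<Rightarrow> complex set" where
  "escape_set p = {z. filterlim (\<lambda>n. (poly p ^^ n) z) at_infinity sequentially}"

definition green_p :: "complex poly \<Rightarrow> complex \<Rightarrow> real" where
  "green_p p z = lim (\<lambda>n. logplus (norm ((poly p ^^ n) z)) / real (degree p) ^ n)"

definition low_monos :: "(nat \<Rightarrow> complex poly) \<Rightarrow> nat \<Rightarrow> (nat \<times> nat) set" where
  "low_monos B d = {(n, m). m < d \<and> coeff (B m) n \<noteq> 0}"

definition alpha :: "(nat \<Rightarrow> complex poly) \<Rightarrow> nat \<Rightarrow> ereal" where
  "alpha B d = (if low_monos B d = {} then -\<infinity>
     else ereal (Max ((\<lambda>(n, m). (real n - real (degree (B d))) / (real d - real m)) ` low_monos B d)))"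

definition alpha_plus :: "(nat \<Rightarrow> complex poly) \<Rightarrow> nat \<Rightarrow> real" where
  "alpha_plus B d = real_of_ereal (max (alpha B d) 0)"

definition W_R :: "(nat \<Rightarrow> complex poly) \<Rightarrow> nat \<Rightarrow> real \<Rightarrow> (complex \<times> complex) set" where
  "W_R B d R = (case alpha B d of
       ereal a \<Rightarrow> {(z, w). norm z > R \<and> norm w > R * norm z powr a}
     | _ \<Rightarrow> {(z, w). norm z > R \<and> w \<noteq> 0})"

definition A_f :: "complex poly \<Rightarrow> (nat \<Rightarrow> complex poly) \<Rightarrow> nat \<Rightarrow> real \<Rightarrow> (complex \<times> complex) set" where
  "A_f p B d R = (\<Union>n. (skew p B d ^^ n) -` W_R B d R)"

definition B_f :: "complex poly \<Rightarrow> (nat \<Rightarrow> complex poly) \<Rightarrow> nat \<Rightarrow> real \<Rightarrow> (complex \<times> complex) set" where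
  "B_f p B d R = (escape_set p \<times> UNIV) - A_f p B d R"

text \<open>x^a with the convention 0^0 = 1 (Isabelle's powr has 0 powr 0 = 0).\<close>
definition rpow :: "real \<Rightarrow> real \<Rightarrow> real" where
  "rpow x a = (if x = 0 then (if a = 0 then 1 else 0) else x powr a)"

end

theory Submission
  imports Defs
begin

lemma poly_norm_bound:
  fixes q :: "complex poly" assumes "norm z \<ge> 1"
  shows "norm (poly q z) \<le> (\<Sum>i\<le>degree q. norm (coeff q i)) * norm z ^ degree q"
proof -
  have "norm (poly q z) \<le> (\<Sum>i\<le>degree q. norm (coeff q i * z^i))"
    unfolding poly_altdef by (rule norm_sum)
  also have "\<dots> \<le> (\<Sum>i\<le>degree q. norm (coeff q i) * norm z ^ degree q)"
    by (rule sum_mono) (auto simp: norm_mult norm_power intro!: mult_left_mono power_increasing assms)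
  finally show ?thesis by (simp add: sum_distrib_right)
qed

lemma monic_bound:
  fixes q :: "complex poly" assumes "lead_coeff q = 1" "degree q = k"
  shows "\<exists>C\<ge>0. \<forall>z. norm z \<ge> 1 \<longrightarrow> norm (poly q z - z^k) \<le> C * norm z^(k-1)"
proof -
  define C where "C = (\<Sum>i<k. norm (coeff q i))"
  have "\<forall>z. norm z \<ge> 1 \<longrightarrow> norm (poly q z - z^k) \<le> C * norm z^(k-1)"
  proof (intro allI impI)
    fix z :: complex assume z: "norm z \<ge> 1"
    have "poly q z = (\<Sum>i<k. coeff q i * z^i) + z^k"
      using assms by (simp add: poly_altdef lessThan_Suc_atMost[symmetric])
    then have "norm (poly q z - z^k) = norm (\<Sum>i<k. coeff q i * z^i)" by simp
    also have "\<dots> \<le> (\<Sum>i<k. norm (coeff q i) * norm z^(k-1))"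
      by (rule order_trans[OF norm_sum sum_mono]) (auto simp: norm_mult norm_power intro!: mult_left_mono power_increasing z)
    finally show "norm (poly q z - z^k) \<le> C * norm z^(k-1)" by (simp add: C_def sum_distrib_right)
  qed
  moreover have "C \<ge> 0" unfolding C_def by (simp add: sum_nonneg)
  ultimately show ?thesis by blast
qed

lemma monic_two_sided:
  fixes q :: "complex poly" assumes "lead_coeff q = 1" "degree q = k" "k \<ge> 1"
  shows "\<exists>R1\<ge>1. \<forall>z. norm z \<ge> R1 \<longrightarrow> norm z^k/2 \<le> norm (poly q z) \<and> norm (poly q z) \<le> 2*norm z^k"
proof -
  obtain C where C: "C \<ge> 0" "\<And>z. norm z \<ge> 1 \<Longrightarrow> norm (poly q z - z^k) \<le> C * norm z^(k-1)"
    using monic_bound[OF assms(1,2)] by blast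
  define R1 where "R1 = max 1 (2*C)"
  have "\<forall>z. norm z \<ge> R1 \<longrightarrow> norm z^k/2 \<le> norm (poly q z) \<and> norm (poly q z) \<le> 2*norm z^k"
  proof (intro allI impI)
    fix z :: complex assume z: "norm z \<ge> R1"
    have z1: "norm z \<ge> 1" and z2: "norm z \<ge> 2*C" using z unfolding R1_def by auto
    have e: "norm z^k = norm z * norm z^(k-1)" using assms(3) by (cases k) auto
    have "2*C*norm z^(k-1) \<le> norm z * norm z^(k-1)" by (rule mult_right_mono[OF z2]) simp
    then have "C * norm z^(k-1) \<le> norm z^k/2" using e by simp
    then have h: "norm (poly q z - z^k) \<le> norm z^k/2" using C(2)[OF z1] by linarith
    have "norm (z^k) \<le> norm (poly q z) + norm (z^k - poly q z)" by (rule norm_triangle_sub)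
    moreover have "norm (poly q z) \<le> norm (z^k) + norm (poly q z - z^k)" by (rule norm_triangle_sub)
    moreover have "norm (z^k - poly q z) = norm (poly q z - z^k)" by (rule norm_minus_commute)
    ultimately show "norm z^k/2 \<le> norm (poly q z) \<and> norm (poly q z) \<le> 2*norm z^k"
      using h by (simp add: norm_power)
  qed
  moreover have "R1 \<ge> 1" unfolding R1_def by simp
  ultimately show ?thesis by blast
qed


lemma esc_ge:
  assumes "z \<in> escape_set p"
  shows "\<exists>k. \<forall>n\<ge>k. norm ((poly p ^^ n) z) \<ge> M"
proof -
  have "filterlim (\<lambda>n. norm ((poly p ^^ n) z)) at_top sequentially"
    using assms filterlim_at_infinity_imp_norm_at_top unfolding escape_set_def by auto
  then have "eventually (\<lambda>n. norm ((poly p ^^ n) z) \<ge> M) sequentially"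
    by (simp add: filterlim_at_top)
  then show ?thesis by (simp add: eventually_sequentially)
qed

lemma growth:
  assumes "d \<ge> 2" "degree p = d" "lead_coeff p = 1" "z \<in> escape_set p"
  shows "\<exists>c>0. \<exists>k. \<forall>n\<ge>k. ln (norm ((poly p ^^ n) z)) \<ge> c * real d ^ n"
proof -
  obtain R1 where R1: "R1 \<ge> 1" "\<And>x. norm x \<ge> R1 \<Longrightarrow> norm x^d/2 \<le> norm (poly p x) \<and> norm (poly p x) \<le> 2*norm x^d"
    using monic_two_sided[OF assms(3,2)] assms(1) by auto
  obtain k0 where k0: "\<forall>n\<ge>k0. norm ((poly p ^^ n) z) \<ge> max R1 4" using esc_ge assms(4) by blast
  define Z where "Z = (\<lambda>n. norm ((poly p ^^ n) z))"
  have Z4: "\<And>n. n \<ge> k0 \<Longrightarrow> Z n \<ge> 4" using k0 unfolding Z_def by auto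
  have Zs: "\<And>n. n \<ge> k0 \<Longrightarrow> Z (Suc n) \<ge> Z n ^ d / 2" using R1(2) k0 unfolding Z_def by auto
  have key: "ln (Z (k0+j)) - ln 2 \<ge> real d ^ j * ln 2" for j
  proof (induction j)
    case 0
    have "ln 4 \<le> ln (Z k0)" using Z4[of k0] by simp
    moreover have "ln (4::real) = 2 * ln 2"
      by (metis ln_realpow numeral_Bit0_eq_double numeral_One numeral_times_numeral of_nat_numeral pos2 power2_eq_square)
    ultimately show ?case by simp
  next
    case (Suc j)
    define x where "x = Z (k0+j)"
    have x4: "x \<ge> 4" unfolding x_def using Z4 by simp
    have y: "Z (k0 + Suc j) \<ge> x^d/2" unfolding x_def using Zs[of "k0+j"] by simp
    have xd: "x^d/2 > 0" using x4 by simp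
    have "ln (x^d/2) \<le> ln (Z (k0 + Suc j))" using y xd by simp
    moreover have "ln (x^d/2) = real d * ln x - ln 2" using x4 by (simp add: ln_div ln_realpow)
    ultimately have a: "ln (Z (k0 + Suc j)) - ln 2 \<ge> real d * ln x - 2 * ln 2" by linarith
    have b: "real d * ln x - 2 * ln 2 \<ge> real d * (ln x - ln 2)"
      using assms(1) by (simp add: algebra_simps)
    have c: "real d * (ln x - ln 2) \<ge> real d * (real d ^ j * ln 2)"
      using Suc.IH unfolding x_def by (intro mult_left_mono) auto
    show ?case using a b c by simp
  qed
  define c where "c = ln 2 / real d ^ k0"
  have "c > 0" unfolding c_def using assms(1) by simp
  moreover have "\<forall>n\<ge>k0. ln (norm ((poly p ^^ n) z)) \<ge> c * real d ^ n"
  proof (intro allI impI)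
    fix n assume n: "n \<ge> k0"
    then obtain j where j: "n = k0 + j" by (metis le_add_diff_inverse)
    have "c * real d ^ n = real d ^ j * ln 2"
      unfolding c_def j using assms(1) by (simp add: power_add)
    also have "\<dots> \<le> ln (Z (k0+j))" using key[of j] ln_gt_zero[of "2::real"] by linarith
    also have "\<dots> = ln (Z n)" using j by simp
    finally show "ln (norm ((poly p ^^ n) z)) \<ge> c * real d ^ n" unfolding Z_def .
  qed
  ultimately show ?thesis by blast
qed

lemma green_conv:
  assumes "d \<ge> 2" "degree p = d" "lead_coeff p = 1" "z \<in> escape_set p"
  shows "(\<lambda>n. ln (norm ((poly p ^^ n) z)) / real d ^ n) \<longlonglongrightarrow> green_p p z"
proof -
  obtain R1 where R1: "R1 \<ge> 1" "\<And>x. norm x \<ge> R1 \<Longrightarrow> norm x^d/2 \<le> norm (poly p x) \<and> norm (poly p x) \<le> 2*norm x^d"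
    using monic_two_sided[OF assms(3,2)] assms(1) by auto
  obtain k0 where k0: "\<forall>n\<ge>k0. norm ((poly p ^^ n) z) \<ge> R1" using esc_ge assms(4) by blast
  define Z where "Z = (\<lambda>n. norm ((poly p ^^ n) z))"
  define s where "s = (\<lambda>n. ln (Z n) / real d ^ n)"
  have Z1: "\<And>n. n \<ge> k0 \<Longrightarrow> Z n \<ge> 1" using k0 R1(1) unfolding Z_def by force
  have Zs: "\<And>n. n \<ge> k0 \<Longrightarrow> Z n ^ d / 2 \<le> Z (Suc n) \<and> Z (Suc n) \<le> 2 * Z n ^ d"
    using R1(2) k0 unfolding Z_def by auto
  have d0: "real d > 0" using assms(1) by simp
  have bnd: "norm (s (Suc n) - s n) \<le> (ln 2 / real d) * (1 / real d)^n" if n: "n \<ge> k0" for n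
  proof -
    define x where "x = Z n"
    define y where "y = Z (Suc n)"
    have x1: "x \<ge> 1" using Z1 n unfolding x_def by simp
    have xy: "x^d/2 \<le> y" "y \<le> 2*x^d" using Zs[OF n] unfolding x_def y_def by auto
    have xd: "x^d/2 > 0" using x1 by simp
    have l1: "ln (x^d/2) \<le> ln y" using xy xd by simp
    have l2: "ln y \<le> ln (2*x^d)" using xy xd by simp
    have e1: "ln (x^d/2) = real d * ln x - ln 2" using x1 by (simp add: ln_div ln_realpow)
    have e2: "ln (2*x^d) = ln 2 + real d * ln x" using x1 by (simp add: ln_mult ln_realpow)
    have ab: "\<bar>ln y - real d * ln x\<bar> \<le> ln 2" using l1 l2 e1 e2 by linarith
    have "s (Suc n) - s n = (ln y - real d * ln x) / real d ^ Suc n"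
      unfolding s_def x_def y_def using d0 by (simp add: field_simps)
    then have "norm (s (Suc n) - s n) = \<bar>ln y - real d * ln x\<bar> / real d ^ Suc n" by simp
    also have "\<dots> \<le> ln 2 / real d ^ Suc n" using ab d0 by (simp add: divide_right_mono)
    also have "\<dots> = (ln 2 / real d) * (1 / real d)^n" by (simp add: power_divide)
    finally show ?thesis .
  qed
  have "summable (\<lambda>n. (ln 2 / real d) * (1 / real d)^n)"
    using assms(1) by (intro summable_mult summable_geometric) simp
  then have sm: "summable (\<lambda>n. s (Suc n) - s n)"
    by (rule summable_comparison_test'[where N=k0]) (rule bnd)
  have "(\<lambda>n. s n - s 0) \<longlonglongrightarrow> suminf (\<lambda>n. s (Suc n) - s n)"
    using summable_LIMSEQ[OF sm] by (simp add: sum_lessThan_telescope)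
  then have "(\<lambda>n. (s n - s 0) + s 0) \<longlonglongrightarrow> suminf (\<lambda>n. s (Suc n) - s n) + s 0"
    by (intro tendsto_add) auto
  then have sL: "s \<longlonglongrightarrow> suminf (\<lambda>n. s (Suc n) - s n) + s 0" by simp
  have ev: "eventually (\<lambda>n. s n = logplus (norm ((poly p ^^ n) z)) / real d ^ n) sequentially"
    unfolding eventually_sequentially
    by (rule exI[of _ k0]) (auto simp: s_def logplus_def Z_def dest!: Z1[unfolded Z_def])
  then have "(\<lambda>n. logplus (norm ((poly p ^^ n) z)) / real d ^ n) \<longlonglongrightarrow> suminf (\<lambda>n. s (Suc n) - s n) + s 0"
    using sL by (rule Lim_transform_eventually[rotated])
  then have "green_p p z = suminf (\<lambda>n. s (Suc n) - s n) + s 0"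
    unfolding green_p_def assms(2) by (rule limI)
  then show ?thesis using sL unfolding s_def Z_def by simp
qed


lemma W_R_basic:
  assumes "(z,w) \<in> W_R B d R" "R \<ge> 0"
  shows "norm z > R \<and> w \<noteq> 0"
proof (cases "alpha B d")
  case (real a)
  then have h: "norm z > R" "norm w > R * norm z powr a" using assms(1) by (auto simp: W_R_def)
  have "R * norm z powr a \<ge> 0" using assms(2) by simp
  then show ?thesis using h by auto
next
  case PInf then show ?thesis using assms(1) by (auto simp: W_R_def)
next
  case MInf then show ?thesis using assms(1) by (auto simp: W_R_def)
qed

lemma low_finite: "finite (low_monos B d)"
proof -
  have "low_monos B d \<subseteq> (\<Union>m<d. {..degree (B m)} \<times> {m})"
    by (auto simp: low_monos_def intro: le_degree)
  moreover have "finite (\<Union>m<d. {..degree (B m)} \<times> {m})" by auto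
  ultimately show ?thesis by (rule finite_subset)
qed

lemma alpha_ge:
  assumes "m < d" "B m \<noteq> 0"
  shows "\<exists>a. alpha B d = ereal a \<and> (real (degree (B m)) - real (degree (B d))) / (real d - real m) \<le> a"
proof -
  have mem: "(degree (B m), m) \<in> low_monos B d" using assms by (simp add: low_monos_def)
  define S where "S = (\<lambda>(n, m). (real n - real (degree (B d))) / (real d - real m)) ` low_monos B d"
  have "finite S" unfolding S_def using low_finite by simp
  moreover have "(real (degree (B m)) - real (degree (B d))) / (real d - real m) \<in> S"
    unfolding S_def using mem by force
  ultimately have "(real (degree (B m)) - real (degree (B d))) / (real d - real m) \<le> Max S" by simp
  moreover have "alpha B d = ereal (Max S)" using mem unfolding alpha_def S_def by auto
  ultimately show ?thesis by blast
qed

lemma key_ineq: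
  fixes x y R a :: real
  assumes x: "x > R" and R: "R \<ge> 1" and y: "y > R * x powr a"
    and a: "a * (real d - real m) \<ge> real n - real g" and m: "m < d"
  shows "x^n * y^m \<le> x^g * y^d / R"
proof -
  have x0: "x > 0" "x \<ge> 1" using x R by auto
  have p0: "R * x powr a > 0" using x0 R by simp
  have y0: "y > 0" using y p0 by linarith
  have h1: "y^(d-m) \<ge> (R * x powr a)^(d-m)" using y p0 by (intro power_mono) auto
  have h2: "(R * x powr a)^(d-m) = R^(d-m) * x powr (a * real (d-m))"
    using x0 by (simp add: power_mult_distrib powr_realpow[symmetric] powr_powr)
  have "R^1 \<le> R^(d-m)" using R m by (intro power_increasing) auto
  then have h3: "R^(d-m) \<ge> R" by simp
  have h4: "x powr (a * real (d-m)) \<ge> x powr (real n - real g)"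
    using a m x0 by (intro powr_mono) (auto simp: of_nat_diff)
  have "R * x powr (real n - real g) \<le> R^(d-m) * x powr (a * real (d-m))"
    using h3 h4 R by (intro mult_mono) auto
  then have Y: "y^(d-m) \<ge> R * x powr (real n - real g)" using h1 h2 by linarith
  have e1: "x^g * x powr (real n - real g) = x^n"
    using x0 by (simp add: powr_realpow[symmetric] powr_add[symmetric])
  have e2: "y^d = y^m * y^(d-m)" using m by (simp add: power_add[symmetric])
  have "x^n * y^m * R = x^g * y^m * (R * x powr (real n - real g))" using e1 by (simp add: algebra_simps)
  also have "\<dots> \<le> x^g * y^m * y^(d-m)" using Y y0 x0 by (intro mult_left_mono) auto
  also have "\<dots> = x^g * y^d" using e2 by simp
  finally show ?thesis using R by (simp add: field_simps)
qed


lemma low_term: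
  assumes R: "R \<ge> 1" and zw: "(z,w) \<in> W_R B d R" and m: "m < d"
  shows "norm (poly (B m) z) * norm w ^ m \<le> (\<Sum>i\<le>degree (B m). norm (coeff (B m) i)) * (norm z ^ degree (B d) * norm w ^ d / R)"
proof (cases "B m = 0")
  case True then show ?thesis by simp
next
  case False
  obtain a where a: "alpha B d = ereal a" "(real (degree (B m)) - real (degree (B d))) / (real d - real m) \<le> a"
    using alpha_ge[of m d B, OF m False] by blast
  have zw': "norm z > R" "norm w > R * norm z powr a" using zw a(1) by (auto simp: W_R_def)
  have dm: "real d - real m > 0" using m by simp
  have a': "a * (real d - real m) \<ge> real (degree (B m)) - real (degree (B d))"
    using a(2) dm by (simp add: pos_divide_le_eq)
  have k: "norm z ^ degree (B m) * norm w ^ m \<le> norm z ^ degree (B d) * norm w ^ d / R"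
    by (rule key_ineq[OF zw'(1) R zw'(2) a' m])
  define C where "C = (\<Sum>i\<le>degree (B m). norm (coeff (B m) i))"
  have C0: "C \<ge> 0" unfolding C_def by (simp add: sum_nonneg)
  have pb: "norm (poly (B m) z) \<le> C * norm z ^ degree (B m)"
    unfolding C_def using poly_norm_bound[of z "B m"] zw'(1) R by simp
  have "norm (poly (B m) z) * norm w ^ m \<le> C * norm z ^ degree (B m) * norm w ^ m"
    using pb by (intro mult_right_mono) auto
  also have "\<dots> \<le> C * (norm z ^ degree (B d) * norm w ^ d / R)"
    using mult_left_mono[OF k C0] by (simp add: mult.assoc)
  finally show ?thesis unfolding C_def .
qed

lemma q_lower:
  assumes g: "degree (B d) \<ge> 1"
    and Rb: "\<And>x. norm x \<ge> Rb \<Longrightarrow> norm x ^ degree (B d) / 2 \<le> norm (poly (B d) x)"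
    and R: "R \<ge> 1" "R \<ge> Rb" "R \<ge> 4 * (\<Sum>m<d. \<Sum>i\<le>degree (B m). norm (coeff (B m) i))"
    and zw: "(z,w) \<in> W_R B d R"
  shows "norm z > R \<and> w \<noteq> 0 \<and> norm (qfun B d z w) \<ge> norm z * norm w ^ d / 4"
proof -
  have zw1: "norm z > R" "w \<noteq> 0" using W_R_basic[OF zw] R(1) by auto
  define X where "X = norm z ^ degree (B d) * norm w ^ d"
  define CC where "CC = (\<Sum>m<d. \<Sum>i\<le>degree (B m). norm (coeff (B m) i))"
  have X0: "X \<ge> 0" unfolding X_def by simp
  have CC0: "CC \<ge> 0" unfolding CC_def by (simp add: sum_nonneg)
  have "{..d} = insert d {..<d}" by auto
  then have split: "qfun B d z w = poly (B d) z * w^d + (\<Sum>m<d. poly (B m) z * w^m)"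
    unfolding qfun_def by simp
  have "norm (\<Sum>m<d. poly (B m) z * w^m) \<le> (\<Sum>m<d. norm (poly (B m) z * w^m))" by (rule norm_sum)
  also have "\<dots> \<le> (\<Sum>m<d. (\<Sum>i\<le>degree (B m). norm (coeff (B m) i)) * (X / R))"
    by (rule sum_mono) (use low_term[OF R(1) zw] in \<open>auto simp: norm_mult norm_power X_def\<close>)
  also have "\<dots> = CC * X / R" unfolding CC_def sum_distrib_right[symmetric] by simp
  also have "\<dots> \<le> X / 4"
  proof -
    have "4 * CC * X \<le> R * X" using R(3) X0 unfolding CC_def by (intro mult_right_mono) auto
    then show ?thesis using R(1) by (simp add: field_simps)
  qed
  finally have s: "norm (\<Sum>m<d. poly (B m) z * w^m) \<le> X / 4" .
  have "norm z ^ degree (B d) / 2 \<le> norm (poly (B d) z)" using Rb zw1(1) R(2) by simp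
  then have "norm z ^ degree (B d) / 2 * norm w ^ d \<le> norm (poly (B d) z) * norm w ^ d"
    by (rule mult_right_mono) simp
  then have b: "norm (poly (B d) z * w^d) \<ge> X / 2"
    unfolding X_def by (simp add: norm_mult norm_power)
  have "norm (poly (B d) z * w^d) - norm (\<Sum>m<d. poly (B m) z * w^m) \<le> norm (qfun B d z w)"
    unfolding split by (rule norm_diff_ineq)
  then have q: "norm (qfun B d z w) \<ge> X / 4" using s b by linarith
  have "norm z ^ 1 \<le> norm z ^ degree (B d)" using g zw1(1) R(1) by (intro power_increasing) auto
  then have "norm z * norm w ^ d \<le> X" unfolding X_def by (simp add: mult_right_mono)
  then show ?thesis using q zw1 by simp
qed


lemma skew_iter_fst: "fst ((skew p B d ^^ n) x) = (poly p ^^ n) (fst x)"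
  by (induction n) (auto simp: skew_def split: prod.splits)

lemma skew_iter_Suc:
  "(skew p B d ^^ Suc n) x = (poly p (fst ((skew p B d ^^ n) x)), qfun B d (fst ((skew p B d ^^ n) x)) (snd ((skew p B d ^^ n) x)))"
  by (simp add: skew_def split: prod.splits)

lemma vbounds:
  fixes x y R a :: real
  assumes "x > R" "R > 1" "0 \<le> y" "y \<le> R * x powr a"
  shows "max a 0 * ln x \<le> logplus (max (rpow x (max a 0)) y) \<and> logplus (max (rpow x (max a 0)) y) \<le> ln R + max a 0 * ln x"
proof -
  define ap where "ap = max a 0"
  have x0: "x > 1" using assms by simp
  have r: "rpow x ap = x powr ap" using x0 by (simp add: rpow_def)
  have r1: "x powr ap \<ge> 1" using x0 unfolding ap_def by (simp add: ge_one_powr_ge_zero)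
  have le: "x powr a \<le> x powr ap" using x0 unfolding ap_def by (intro powr_mono) auto
  define M where "M = max (x powr ap) y"
  have M1: "M \<ge> 1" unfolding M_def using r1 by simp
  have lp: "logplus M = ln M" unfolding logplus_def using M1 by simp
  have "ln (x powr ap) \<le> ln M" using r1 M1 by (subst ln_le_cancel_iff) (auto simp: M_def)
  moreover have "ln (x powr ap) = ap * ln x" using x0 by (simp add: ln_powr)
  moreover have "M \<le> R * x powr ap"
  proof -
    have "R * x powr a \<le> R * x powr ap" using le assms(2) by (intro mult_left_mono) auto
    moreover have "1 * x powr ap \<le> R * x powr ap" using assms(2) r1 by (intro mult_right_mono) auto
    ultimately show ?thesis unfolding M_def using assms(4) by simp
  qed
  then have "ln M \<le> ln (R * x powr ap)" using M1 by simp
  moreover have "ln (R * x powr ap) = ln R + ap * ln x" using x0 assms(2) by (simp add: ln_mult ln_powr)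
  ultimately show ?thesis using lp r unfolding M_def ap_def by simp
qed

lemma Bf_case:
  assumes "d \<ge> 2" "degree p = d" "lead_coeff p = 1" "R > 1" "z \<in> escape_set p"
    and nA: "(z, w) \<notin> A_f p B d R"
  shows "(\<lambda>n. ereal (logplus (max (rpow (norm (fst ((skew p B d ^^ n) (z, w)))) (alpha_plus B d))
                                     (norm (snd ((skew p B d ^^ n) (z, w))))) / real d ^ n))
          \<longlonglongrightarrow> ereal (alpha_plus B d * green_p p z)"
proof -
  define X where "X = (\<lambda>n. (skew p B d ^^ n) (z, w))"
  define Z where "Z = (\<lambda>n. norm ((poly p ^^ n) z))"
  have fX: "fst (X n) = (poly p ^^ n) z" for n unfolding X_def by (simp add: skew_iter_fst)
  have nW: "(fst (X n), snd (X n)) \<notin> W_R B d R" for n using nA unfolding X_def A_f_def by auto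
  obtain k where k: "\<forall>n\<ge>k. norm ((poly p ^^ n) z) \<ge> R + 1" using esc_ge assms(5) by blast
  have Zk: "n \<ge> k \<Longrightarrow> Z n > R" for n using k unfolding Z_def by force
  have G: "(\<lambda>n. ln (Z n) / real d ^ n) \<longlonglongrightarrow> green_p p z"
    unfolding Z_def by (rule green_conv[OF assms(1,2,3,5)])
  show ?thesis
  proof (cases "low_monos B d = {}")
    case True
    then have al: "alpha B d = -\<infinity>" by (simp add: alpha_def)
    then have ap: "alpha_plus B d = 0" by (simp add: alpha_plus_def)
    have "n \<ge> k \<Longrightarrow> snd (X n) = 0" for n using nW[of n] Zk[of n] al unfolding fX Z_def
      by (auto simp: W_R_def)
    then have "eventually (\<lambda>n. ereal 0 = ereal (logplus (max (rpow (norm (fst (X n))) (alpha_plus B d))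
                                     (norm (snd (X n)))) / real d ^ n)) sequentially"
      unfolding eventually_sequentially ap by (auto intro!: exI[of _ k] simp: rpow_def logplus_def)
    then have "(\<lambda>n. ereal (logplus (max (rpow (norm (fst (X n))) (alpha_plus B d))
                                     (norm (snd (X n)))) / real d ^ n)) \<longlonglongrightarrow> ereal 0"
      by (rule Lim_transform_eventually[OF tendsto_const])
    then show ?thesis unfolding X_def ap by simp
  next
    case False
    define a where "a = Max ((\<lambda>(n, m). (real n - real (degree (B d))) / (real d - real m)) ` low_monos B d)"
    have al: "alpha B d = ereal a" using False unfolding alpha_def a_def by simp
    have ap: "alpha_plus B d = max a 0" unfolding alpha_plus_def al by (simp add: max_def zero_ereal_def)
    have yb: "n \<ge> k \<Longrightarrow> norm (snd (X n)) \<le> R * Z n powr a" for n using nW[of n] Zk[of n] al unfolding fX Z_def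
      by (auto simp: W_R_def)
    define V where "V = (\<lambda>n. logplus (max (rpow (norm (fst (X n))) (alpha_plus B d)) (norm (snd (X n)))) / real d ^ n)"
    have d0: "real d > 0" using assms(1) by simp
    have vb: "max a 0 * (ln (Z n) / real d ^ n) \<le> V n \<and> V n \<le> ln R / real d ^ n + max a 0 * (ln (Z n) / real d ^ n)"
      if n: "n \<ge> k" for n
    proof -
      have h: "max a 0 * ln (Z n) \<le> logplus (max (rpow (Z n) (max a 0)) (norm (snd (X n)))) \<and> logplus (max (rpow (Z n) (max a 0)) (norm (snd (X n)))) \<le> ln R + max a 0 * ln (Z n)"
        by (rule vbounds[OF Zk[OF n] assms(4) norm_ge_zero yb[OF n]])
      have V: "V n = logplus (max (rpow (Z n) (max a 0)) (norm (snd (X n)))) / real d ^ n"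
        unfolding V_def ap fX Z_def ..
      show ?thesis unfolding V using h d0 by (auto simp: divide_right_mono add_divide_distrib[symmetric])
    qed
    have "V \<longlonglongrightarrow> max a 0 * green_p p z"
    proof (rule real_tendsto_sandwich)
      show "eventually (\<lambda>n. max a 0 * (ln (Z n) / real d ^ n) \<le> V n) sequentially"
        unfolding eventually_sequentially using vb by blast
      show "eventually (\<lambda>n. V n \<le> ln R / real d ^ n + max a 0 * (ln (Z n) / real d ^ n)) sequentially"
        unfolding eventually_sequentially using vb by blast
      show "(\<lambda>n. max a 0 * (ln (Z n) / real d ^ n)) \<longlonglongrightarrow> max a 0 * green_p p z"
        by (intro tendsto_mult tendsto_const G)
      have "(\<lambda>n. ln R / real d ^ n + max a 0 * (ln (Z n) / real d ^ n)) \<longlonglongrightarrow> 0 + max a 0 * green_p p z"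
        using assms(1) by (intro tendsto_add tendsto_mult tendsto_const G LIMSEQ_divide_realpow_zero) auto
      then show "(\<lambda>n. ln R / real d ^ n + max a 0 * (ln (Z n) / real d ^ n)) \<longlonglongrightarrow> max a 0 * green_p p z"
        by simp
    qed
    then show ?thesis unfolding ap using tendsto_ereal unfolding V_def X_def by (simp add: ap)
  qed
qed


lemma Af_case:
  assumes "d \<ge> 2" "degree p = d" "lead_coeff p = 1" "z \<in> escape_set p"
    and g: "degree (B d) \<ge> 1"
    and Rb: "\<And>x. norm x \<ge> Rb \<Longrightarrow> norm x ^ degree (B d) / 2 \<le> norm (poly (B d) x)"
    and R: "R \<ge> 1" "R \<ge> Rb" "R \<ge> 4 * (\<Sum>m<d. \<Sum>i\<le>degree (B m). norm (coeff (B m) i))"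
    and inv: "skew p B d ` W_R B d R \<subseteq> W_R B d R"
    and inA: "(z, w) \<in> A_f p B d R"
  shows "(\<lambda>n. ereal (logplus (max (rpow (norm (fst ((skew p B d ^^ n) (z, w)))) (alpha_plus B d))
                                     (norm (snd ((skew p B d ^^ n) (z, w))))) / real d ^ n))
          \<longlonglongrightarrow> \<infinity>"
proof -
  define X where "X = (\<lambda>n. (skew p B d ^^ n) (z, w))"
  define Z where "Z = (\<lambda>n. norm ((poly p ^^ n) z))"
  define Wn where "Wn = (\<lambda>n. snd (X n))"
  have fX: "fst (X n) = (poly p ^^ n) z" for n unfolding X_def by (simp add: skew_iter_fst)
  obtain k where k: "X k \<in> W_R B d R" using inA unfolding A_f_def X_def by auto
  have inW: "n \<ge> k \<Longrightarrow> X n \<in> W_R B d R" for n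
  proof (induction n rule: dec_induct)
    case base then show ?case by (rule k)
  next
    case (step n)
    have "X (Suc n) = skew p B d (X n)" unfolding X_def by simp
    then show ?case using step.IH inv by auto
  qed
  have stepW: "Z n > R \<and> Wn n \<noteq> 0 \<and> norm (Wn (Suc n)) \<ge> Z n * norm (Wn n) ^ d / 4" if n: "n \<ge> k" for n
  proof -
    have m: "(fst (X n), snd (X n)) \<in> W_R B d R" using inW[OF n] by simp
    have "Wn (Suc n) = qfun B d (fst (X n)) (snd (X n))" unfolding Wn_def X_def
      by (simp only: skew_iter_Suc snd_conv)
    then show ?thesis using q_lower[OF g Rb R m] unfolding Wn_def Z_def fX by simp
  qed
  obtain c k1 where c: "c > 0" "\<forall>n\<ge>k1. ln (Z n) \<ge> c * real d ^ n"
    using growth[OF assms(1-4)] unfolding Z_def by blast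
  have "filterlim (\<lambda>n. norm (real d ^ n)) at_top sequentially"
    using assms(1) by (intro filterlim_at_infinity_imp_norm_at_top filterlim_realpow_sequentially_gt1) simp
  then have "eventually (\<lambda>n. real d ^ n \<ge> 2 * ln 4 / c) sequentially"
    by (simp add: filterlim_at_top)
  then obtain k2 where k2: "\<forall>n\<ge>k2. real d ^ n \<ge> 2 * ln 4 / c" by (auto simp: eventually_sequentially)
  define N where "N = max k (max k1 k2)"
  define u where "u = (\<lambda>n. ln (norm (Wn n)) / real d ^ n)"
  define e where "e = c / (2 * real d)"
  have d0: "real d > 0" using assms(1) by simp
  have e0: "e > 0" unfolding e_def using c d0 by simp
  have ustep: "u (Suc n) \<ge> u n + e" if n: "n \<ge> N" for n
  proof -
    have h: "Z n > R" "Wn n \<noteq> 0" "norm (Wn (Suc n)) \<ge> Z n * norm (Wn n) ^ d / 4"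
      using stepW[of n] n unfolding N_def by auto
    have lz: "ln (Z n) \<ge> c * real d ^ n" using c(2) n unfolding N_def by auto
    have "c * real d ^ n \<ge> c * (2 * ln 4 / c)" using k2 n c(1) unfolding N_def by (intro mult_left_mono) auto
    then have big: "c * real d ^ n \<ge> 2 * ln 4" using c(1) by simp
    have pos: "Z n * norm (Wn n) ^ d / 4 > 0" using h R by simp
    have "ln (Z n * norm (Wn n) ^ d / 4) \<le> ln (norm (Wn (Suc n)))"
      using h(3) pos by (subst ln_le_cancel_iff) auto
    moreover have "ln (Z n * norm (Wn n) ^ d / 4) = ln (Z n) + real d * ln (norm (Wn n)) - ln 4"
      using h R by (simp add: ln_div ln_mult ln_realpow)
    ultimately have "ln (norm (Wn (Suc n))) \<ge> real d * ln (norm (Wn n)) + c * real d ^ n / 2"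
      using lz big by linarith
    then have "ln (norm (Wn (Suc n))) / real d ^ Suc n \<ge> (real d * ln (norm (Wn n)) + c * real d ^ n / 2) / real d ^ Suc n"
      using d0 by (intro divide_right_mono) auto
    moreover have "(real d * ln (norm (Wn n)) + c * real d ^ n / 2) / real d ^ Suc n = u n + e"
      unfolding u_def e_def using d0 by (simp add: field_simps)
    ultimately show ?thesis unfolding u_def by simp
  qed
  have ugrow: "u n \<ge> u N + real (n - N) * e" if "n \<ge> N" for n
    using that
  proof (induction n rule: dec_induct)
    case base then show ?case by simp
  next
    case (step n)
    have "real (Suc n - N) = real (n - N) + 1" using step.hyps(1) by simp
    then show ?case using step.IH ustep[OF step.hyps(1)] by (simp add: algebra_simps)
  qed
  define V where "V = (\<lambda>n. logplus (max (rpow (norm (fst (X n))) (alpha_plus B d)) (norm (Wn n))) / real d ^ n)"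
  have Vu: "V n \<ge> u n" if n: "n \<ge> N" for n
  proof -
    have w0: "Wn n \<noteq> 0" using stepW[of n] n unfolding N_def by auto
    have "ln (norm (Wn n)) \<le> ln (max (rpow (norm (fst (X n))) (alpha_plus B d)) (norm (Wn n)))"
      using w0 by (subst ln_le_cancel_iff) (auto simp: less_max_iff_disj)
    also have "\<dots> \<le> logplus (max (rpow (norm (fst (X n))) (alpha_plus B d)) (norm (Wn n)))"
      unfolding logplus_def by simp
    finally show ?thesis unfolding V_def u_def using d0 by (intro divide_right_mono) auto
  qed
  have "(\<lambda>n. ereal (V n)) \<longlonglongrightarrow> \<infinity>"
    unfolding tendsto_PInfty
  proof
    fix r :: real
    obtain j :: nat where j: "(r - u N) / e < real j" using reals_Archimedean2 by blast
    have "r < u N + real j * e" using j e0 by (simp add: field_simps)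
    then have "\<forall>n\<ge>N + j. r < V n"
    proof (intro allI impI)
      fix n assume n: "n \<ge> N + j" and r: "r < u N + real j * e"
      have "real j * e \<le> real (n - N) * e" using n e0 by (intro mult_right_mono) auto
      then show "r < V n" using ugrow[of n] Vu[of n] n r by simp
    qed
    then show "eventually (\<lambda>n. ereal r < ereal (V n)) sequentially"
      unfolding eventually_sequentially by auto
  qed
  then show ?thesis unfolding V_def Wn_def X_def .
qed


theorem corollary6p9:
  fixes p :: "complex poly" and B :: "nat \<Rightarrow> complex poly" and d :: nat
  assumes "d \<ge> 2"
    and "degree p = d" and "lead_coeff p = 1"
    and "lead_coeff (B d) = 1" and "degree (B d) \<ge> 1"
  shows "\<exists>R0. \<forall>R \<ge> R0. R > 1 \<and> skew p B d ` W_R B d R \<subseteq> W_R B d R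
            \<and> W_R B d R \<subseteq> escape_set p \<times> UNIV \<longrightarrow>
     (\<forall>z w. z \<in> escape_set p \<longrightarrow>
        ((\<lambda>n. ereal (logplus (max (rpow (norm (fst ((skew p B d ^^ n) (z, w)))) (alpha_plus B d))
                                     (norm (snd ((skew p B d ^^ n) (z, w))))) / real d ^ n))
          \<longlonglongrightarrow> (if (z, w) \<in> A_f p B d R then \<infinity>
                else ereal (alpha_plus B d * green_p p z))))"
proof -
  obtain Rb where Rb: "Rb \<ge> 1" "\<And>x. norm x \<ge> Rb \<Longrightarrow> norm x ^ degree (B d) / 2 \<le> norm (poly (B d) x)"
    using monic_two_sided[OF assms(4) refl assms(5)] by blast
  define R0 where "R0 = max Rb (max 1 (4 * (\<Sum>m<d. \<Sum>i\<le>degree (B m). norm (coeff (B m) i))))"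
  show ?thesis
  proof (rule exI[of _ R0], intro allI impI)
    fix R z w
    assume R: "R \<ge> R0" and H: "R > 1 \<and> skew p B d ` W_R B d R \<subseteq> W_R B d R \<and> W_R B d R \<subseteq> escape_set p \<times> UNIV"
      and z: "z \<in> escape_set p"
    have R': "R \<ge> 1" "R \<ge> Rb" "R \<ge> 4 * (\<Sum>m<d. \<Sum>i\<le>degree (B m). norm (coeff (B m) i))"
      using R unfolding R0_def by auto
    show "(\<lambda>n. ereal (logplus (max (rpow (norm (fst ((skew p B d ^^ n) (z, w)))) (alpha_plus B d))
                                     (norm (snd ((skew p B d ^^ n) (z, w))))) / real d ^ n))
          \<longlonglongrightarrow> (if (z, w) \<in> A_f p B d R then \<infinity>
                else ereal (alpha_plus B d * green_p p z))"
    proof (cases "(z, w) \<in> A_f p B d R")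
      case True
      then show ?thesis using Af_case[OF assms(1,2,3) z assms(5) Rb(2) R' _ True] H by simp
    next
      case False
      then show ?thesis using Bf_case[OF assms(1,2,3) _ z False] H by simp
    qed
  qed
qed

end
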